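(* Let $\alpha = (\alpha_{rs})_{r,s=1}^k$ be a $k\times k$ doubly stochastic matrix and let $\beta = \frac{1}{k}\max_{\pi}\sum_{r=1}^k \alpha_{r,\pi(r)}$, where the maximum is over all permutations $\pi$ of $\{1,\dots,k\}$. Then \[ |\alpha|^2 := \sum_{r,s}\alpha_{rs}^2 \le k\beta . \]
   Context: A doubly stochastic matrix has nonnegative entries with every row sum and column sum equal to $1$. $|\alpha|$ denotes the Frobenius norm. *)

theory Defs
  imports "HOL-Analysis.Analysis" "HOL-Combinatorics.Permutations"
begin

definition doubly_stochastic :: "real^'n^'n \<Rightarrow> bool" where
  "doubly_stochastic A \<longleftrightarrow>
     (\<forall>r s. 0 \<le> A $ r $ s) \<and>
     (\<forall>r. (\<Sum>s\<in>UNIV. A $ r $ s) = 1) \<and>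
     (\<forall>s. (\<Sum>r\<in>UNIV. A $ r $ s) = 1)"

definition frob_norm_sq :: "real^'n^'n \<Rightarrow> real" where
  "frob_norm_sq A = (\<Sum>r\<in>UNIV. \<Sum>s\<in>UNIV. (A $ r $ s)^2)"

end

theory Submission
  imports Defs
begin

lemma hall:
  fixes S :: "'a \<Rightarrow> 'b set"
  assumes "finite A" "\<forall>a\<in>A. finite (S a)" "\<forall>X\<subseteq>A. card X \<le> card (\<Union>(S ` X))"
  shows "\<exists>f. inj_on f A \<and> (\<forall>a\<in>A. f a \<in> S a)"
  using assms
proof (induction A arbitrary: S rule: finite_psubset_induct)
  case (psubset A)
  have finN: "finite (\<Union>(S ` X))" if "X \<subseteq> A" for X
    using psubset.prems(1) psubset.hyps(1) that by (meson finite_UN_I finite_subset subsetD)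
  show ?case
  proof (cases "A = {}")
    case True then show ?thesis by auto
  next
    case nonempty: False
    show ?thesis
    proof (cases "\<forall>X. X \<subseteq> A \<and> X \<noteq> {} \<and> X \<noteq> A \<longrightarrow> card X < card (\<Union>(S ` X))")
      case True
      obtain a where a: "a \<in> A" using nonempty by auto
      have "card {a} \<le> card (S a)" using psubset.prems(2)[rule_format, of "{a}"] a by auto
      then have "S a \<noteq> {}" by auto
      then obtain b where b: "b \<in> S a" by auto
      define S' where "S' = (\<lambda>x. S x - {b})"
      have "\<exists>g. inj_on g (A - {a}) \<and> (\<forall>x\<in>A - {a}. g x \<in> S' x)"
      proof (rule psubset.IH)
        show "A - {a} \<subset> A" using a by auto
        show "\<forall>x\<in>A - {a}. finite (S' x)" using psubset.prems(1) by (auto simp: S'_def)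
        show "\<forall>X\<subseteq>A - {a}. card X \<le> card (\<Union> (S' ` X))"
        proof (intro allI impI)
          fix X assume X: "X \<subseteq> A - {a}"
          show "card X \<le> card (\<Union> (S' ` X))"
          proof (cases "X = {}")
            case True then show ?thesis by simp
          next
            case False
            have "X \<subseteq> A" "X \<noteq> A" using X a by auto
            then have lt: "card X < card (\<Union>(S ` X))" using True False by blast
            have eq: "\<Union> (S' ` X) = \<Union>(S ` X) - {b}" by (auto simp: S'_def)
            have "card (\<Union>(S ` X) - {b}) \<ge> card (\<Union>(S ` X)) - 1"
              by (simp add: card_Diff_singleton_if)
            then show ?thesis using lt by (simp only: eq)
          qed
        qed
      qed
      then obtain g where g: "inj_on g (A - {a})" "\<forall>x\<in>A - {a}. g x \<in> S x - {b}"
        unfolding S'_def by blast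
      define f where "f = g(a := b)"
      have "inj_on f A"
        unfolding inj_on_def f_def using g(2) g(1)[unfolded inj_on_def] by auto
      moreover have "\<forall>x\<in>A. f x \<in> S x" using g(2) b by (auto simp: f_def)
      ultimately show ?thesis by blast
    next
      case False
      then obtain X where X: "X \<subseteq> A" "X \<noteq> {}" "X \<noteq> A" "card (\<Union>(S ` X)) \<le> card X"
        by (auto simp: not_less)
      have "\<exists>g. inj_on g X \<and> (\<forall>x\<in>X. g x \<in> S x)"
        using psubset.IH[of X S] X psubset.prems by auto
      then obtain g where g: "inj_on g X" "\<forall>x\<in>X. g x \<in> S x" by blast
      define N where "N = \<Union>(S ` X)"
      define S' where "S' = (\<lambda>x. S x - N)"
      have "\<exists>h. inj_on h (A - X) \<and> (\<forall>x\<in>A - X. h x \<in> S' x)"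
      proof (rule psubset.IH)
        show "A - X \<subset> A" using X by auto
        show "\<forall>x\<in>A - X. finite (S' x)" using psubset.prems(1) by (auto simp: S'_def)
        show "\<forall>Y\<subseteq>A - X. card Y \<le> card (\<Union> (S' ` Y))"
        proof (intro allI impI)
          fix Y assume Y: "Y \<subseteq> A - X"
          have eq: "\<Union> (S' ` Y) = \<Union>(S ` (X \<union> Y)) - N" by (auto simp: S'_def N_def)
          have sub: "N \<subseteq> \<Union>(S ` (X \<union> Y))" by (auto simp: N_def)
          have fin: "finite (\<Union>(S ` (X \<union> Y)))" using finN X Y by auto
          have c1: "card (\<Union> (S' ` Y)) = card (\<Union>(S ` (X \<union> Y))) - card N"
            using eq sub fin by (simp add: card_Diff_subset finite_subset)
          have c2: "card (X \<union> Y) \<le> card (\<Union>(S ` (X \<union> Y)))"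
          proof -
            have "X \<union> Y \<subseteq> A" using X Y by auto
            then show ?thesis using psubset.prems(2) by blast
          qed
          have fX: "finite X" "finite Y" using X(1) Y psubset.hyps(1) by (auto intro: finite_subset)
          have c3: "card (X \<union> Y) = card X + card Y"
            using Y fX by (intro card_Un_disjoint) auto
          have c4: "card N = card X"
            using X(4) psubset.prems(2) X(1) by (auto simp: N_def intro: antisym)
          show "card Y \<le> card (\<Union> (S' ` Y))" using c1 c2 c3 c4 by linarith
        qed
      qed
      then obtain h where h: "inj_on h (A - X)" "\<forall>x\<in>A - X. h x \<in> S x - N"
        unfolding S'_def by blast
      define f where "f = (\<lambda>x. if x \<in> X then g x else h x)"
      have gN: "\<forall>x\<in>X. g x \<in> N" using g(2) by (auto simp: N_def)
      have "inj_on f A"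
        unfolding inj_on_def f_def using g(1)[unfolded inj_on_def] h(1)[unfolded inj_on_def] h(2) gN
        by (smt (verit) DiffD2 DiffI)
      moreover have "\<forall>x\<in>A. f x \<in> S x" using g(2) h(2) by (auto simp: f_def)
      ultimately show ?thesis by blast
    qed
  qed
qed

lemma perm_in_support:
  fixes D :: "'k::finite \<Rightarrow> 'k \<Rightarrow> real"
  assumes nn: "\<forall>r s. 0 \<le> D r s" and rows: "\<forall>r. (\<Sum>s\<in>UNIV. D r s) = c"
    and cols: "\<forall>s. (\<Sum>r\<in>UNIV. D r s) = c" and cpos: "c > 0"
  shows "\<exists>\<pi>. \<pi> permutes (UNIV::'k set) \<and> (\<forall>r. D r (\<pi> r) > 0)"
proof -
  define S where "S = (\<lambda>r. {s. D r s > 0})"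
  have "\<exists>f. inj_on f (UNIV::'k set) \<and> (\<forall>a\<in>UNIV. f a \<in> S a)"
  proof (rule hall)
    show "finite (UNIV::'k set)" by simp
    show "\<forall>a\<in>UNIV. finite (S a)" by simp
    show "\<forall>X\<subseteq>UNIV. card X \<le> card (\<Union> (S ` X))"
    proof (intro allI impI)
      fix X :: "'k set"
      define N where "N = \<Union> (S ` X)"
      have "c * card X = (\<Sum>r\<in>X. \<Sum>s\<in>UNIV. D r s)" using rows by simp
      also have "\<dots> = (\<Sum>r\<in>X. \<Sum>s\<in>N. D r s)"
      proof (rule sum.cong[OF refl])
        fix r assume r: "r \<in> X"
        show "(\<Sum>s\<in>UNIV. D r s) = (\<Sum>s\<in>N. D r s)"
        proof (rule sum.mono_neutral_right)
          show "\<forall>i\<in>UNIV - N. D r i = 0"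
          proof
            fix i assume "i \<in> UNIV - N"
            then have "\<not> D r i > 0" using r by (auto simp: N_def S_def)
            then show "D r i = 0" using nn[rule_format, of r i] by linarith
          qed
        qed auto
      qed
      also have "\<dots> = (\<Sum>s\<in>N. \<Sum>r\<in>X. D r s)" by (rule sum.swap)
      also have "\<dots> \<le> (\<Sum>s\<in>N. \<Sum>r\<in>UNIV. D r s)"
        by (intro sum_mono sum_mono2) (auto simp: nn)
      also have "\<dots> = c * card N" using cols by simp
      finally have "c * card X \<le> c * card N" .
      then show "card X \<le> card N" using cpos by simp
    qed
  qed
  then obtain f where f: "inj f" "\<forall>r. D r (f r) > 0" by (auto simp: S_def)
  have "bij f" using f(1) finite_UNIV_inj_surj[of f] by (simp add: bij_def)
  then have "f permutes (UNIV::'k set)" by (intro bij_imp_permutes) auto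
  then show ?thesis using f(2) by blast
qed

lemma bvn_bound:
  fixes D W :: "'k::finite \<Rightarrow> 'k \<Rightarrow> real"
  assumes "\<forall>r s. 0 \<le> D r s" "\<forall>r. (\<Sum>s\<in>UNIV. D r s) = c" "\<forall>s. (\<Sum>r\<in>UNIV. D r s) = c"
  shows "(\<Sum>r\<in>UNIV. \<Sum>s\<in>UNIV. W r s * D r s)
           \<le> c * Max ((\<lambda>\<pi>. \<Sum>r\<in>UNIV. W r (\<pi> r)) ` {\<pi>. \<pi> permutes (UNIV :: 'k set)})"
  using assms
proof (induction "card {p. D (fst p) (snd p) \<noteq> 0}" arbitrary: D c rule: less_induct)
  case less
  note nn = less.prems(1) and rows = less.prems(2) and cols = less.prems(3)
  define M where "M = Max ((\<lambda>\<pi>. \<Sum>r\<in>UNIV. W r (\<pi> r)) ` {\<pi>. \<pi> permutes (UNIV :: 'k set)})"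
  have Mge: "(\<Sum>r\<in>UNIV. W r (\<pi> r)) \<le> M" if "\<pi> permutes (UNIV :: 'k set)" for \<pi>
    unfolding M_def using that by (intro Max_ge) (auto intro: finite_permutations)
  obtain r1 :: 'k where True by blast
  have c0: "c \<ge> 0" using rows[rule_format, of r1] nn by (metis sum_nonneg)
  show ?case
  proof (cases "c = 0")
    case True
    then have "\<forall>r s. D r s = 0" using rows nn by (simp add: sum_nonneg_eq_0_iff)
    then have "(\<Sum>r\<in>UNIV. \<Sum>s\<in>UNIV. W r s * D r s) = 0" by simp
    then show ?thesis using True by simp
  next
    case False
    then have cpos: "c > 0" using c0 by simp
    obtain \<pi> where \<pi>: "\<pi> permutes (UNIV::'k set)" "\<forall>r. D r (\<pi> r) > 0"
      using perm_in_support[OF nn rows cols cpos] by blast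
    define m where "m = Min ((\<lambda>r. D r (\<pi> r)) ` UNIV)"
    have mle: "m \<le> D r (\<pi> r)" for r unfolding m_def by simp
    obtain r0 where r0: "D r0 (\<pi> r0) = m"
    proof -
      have "m \<in> (\<lambda>r. D r (\<pi> r)) ` UNIV" unfolding m_def by (intro Min_in) auto
      then show ?thesis using that by blast
    qed
    have mpos: "m > 0" using \<pi>(2)[rule_format, of r0] r0 by simp
    define D' where "D' = (\<lambda>r s. D r s - (if s = \<pi> r then m else 0))"
    have nn': "\<forall>r s. 0 \<le> D' r s" using nn mle by (auto simp: D'_def)
    have rows': "\<forall>r. (\<Sum>s\<in>UNIV. D' r s) = c - m"
      using rows by (simp add: D'_def sum_subtractf)
    have one: "(\<Sum>r\<in>UNIV. (if s = \<pi> r then m else 0)) = m" for s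
    proof -
      have "{r. s = \<pi> r} = {inv \<pi> s}"
        using \<pi>(1) by (auto simp: permutes_inverses)
      then have "(\<Sum>r\<in>UNIV. (if s = \<pi> r then m else 0)) = (\<Sum>r\<in>{r. s = \<pi> r}. m)"
        by (simp add: sum.If_cases)
      also have "\<dots> = m" using \<open>{r. s = \<pi> r} = {inv \<pi> s}\<close> by simp
      finally show ?thesis .
    qed
    have cols': "\<forall>s. (\<Sum>r\<in>UNIV. D' r s) = c - m"
      using cols one by (simp add: D'_def sum_subtractf)
    have sub: "{p. D' (fst p) (snd p) \<noteq> 0} \<subset> {p. D (fst p) (snd p) \<noteq> 0}"
    proof
      show "{p. D' (fst p) (snd p) \<noteq> 0} \<subseteq> {p. D (fst p) (snd p) \<noteq> 0}"
      proof
        fix p assume "p \<in> {p. D' (fst p) (snd p) \<noteq> 0}"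
        then show "p \<in> {p. D (fst p) (snd p) \<noteq> 0}" using \<pi>(2)[rule_format, of "fst p"]
          by (cases "snd p = \<pi> (fst p)") (auto simp: D'_def)
      qed
      have "(r0, \<pi> r0) \<in> {p. D (fst p) (snd p) \<noteq> 0}" using \<pi>(2)[rule_format, of r0] by simp
      moreover have "(r0, \<pi> r0) \<notin> {p. D' (fst p) (snd p) \<noteq> 0}" using r0 by (simp add: D'_def)
      ultimately show "{p. D' (fst p) (snd p) \<noteq> 0} \<noteq> {p. D (fst p) (snd p) \<noteq> 0}" by blast
    qed
    have lt: "card {p. D' (fst p) (snd p) \<noteq> 0} < card {p. D (fst p) (snd p) \<noteq> 0}"
      using sub by (intro psubset_card_mono) auto
    have IH: "(\<Sum>r\<in>UNIV. \<Sum>s\<in>UNIV. W r s * D' r s) \<le> (c - m) * M"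
      unfolding M_def using less.hyps[OF lt nn' rows' cols'] .
    have split: "(\<Sum>r\<in>UNIV. \<Sum>s\<in>UNIV. W r s * D r s)
        = (\<Sum>r\<in>UNIV. \<Sum>s\<in>UNIV. W r s * D' r s) + m * (\<Sum>r\<in>UNIV. W r (\<pi> r))"
    proof -
      have "(\<Sum>r\<in>UNIV. \<Sum>s\<in>UNIV. W r s * D r s)
         = (\<Sum>r\<in>UNIV. (\<Sum>s\<in>UNIV. W r s * D' r s) + m * W r (\<pi> r))"
      proof (rule sum.cong[OF refl])
        fix r
        have "(\<Sum>s\<in>UNIV. W r s * D r s) = (\<Sum>s\<in>UNIV. W r s * D' r s + (if s = \<pi> r then m * W r s else 0))"
          by (rule sum.cong) (auto simp: D'_def algebra_simps)
        also have "\<dots> = (\<Sum>s\<in>UNIV. W r s * D' r s) + m * W r (\<pi> r)"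
          by (simp add: sum.distrib)
        finally show "(\<Sum>s\<in>UNIV. W r s * D r s) = (\<Sum>s\<in>UNIV. W r s * D' r s) + m * W r (\<pi> r)" .
      qed
      also have "\<dots> = (\<Sum>r\<in>UNIV. \<Sum>s\<in>UNIV. W r s * D' r s) + m * (\<Sum>r\<in>UNIV. W r (\<pi> r))"
        by (simp add: sum.distrib sum_distrib_left)
      finally show ?thesis .
    qed
    have "m * (\<Sum>r\<in>UNIV. W r (\<pi> r)) \<le> m * M"
      using Mge[OF \<pi>(1)] mpos by (intro mult_left_mono) auto
    then have "(\<Sum>r\<in>UNIV. \<Sum>s\<in>UNIV. W r s * D r s) \<le> (c - m) * M + m * M"
      using split IH by linarith
    then show ?thesis unfolding M_def by (simp add: algebra_simps)
  qed
qed

theorem mainTheorem4: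
  fixes \<alpha> :: "real^'k^'k" and \<beta> :: real
  assumes "doubly_stochastic \<alpha>"
    and "\<beta> = (1 / real CARD('k)) *
               Max ((\<lambda>\<pi>. \<Sum>r\<in>UNIV. \<alpha> $ r $ \<pi> r) ` {\<pi>. \<pi> permutes (UNIV :: 'k set)})"
  shows "frob_norm_sq \<alpha> \<le> real CARD('k) * \<beta>"
proof -
  have ds: "\<forall>r s. 0 \<le> \<alpha> $ r $ s" "\<forall>r. (\<Sum>s\<in>UNIV. \<alpha> $ r $ s) = 1" "\<forall>s. (\<Sum>r\<in>UNIV. \<alpha> $ r $ s) = 1"
    using assms(1) unfolding doubly_stochastic_def by auto
  have "(\<Sum>r\<in>UNIV. \<Sum>s\<in>UNIV. \<alpha> $ r $ s * \<alpha> $ r $ s)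
     \<le> 1 * Max ((\<lambda>\<pi>. \<Sum>r\<in>UNIV. \<alpha> $ r $ \<pi> r) ` {\<pi>. \<pi> permutes (UNIV :: 'k set)})"
    using bvn_bound[of "\<lambda>r s. \<alpha> $ r $ s" 1 "\<lambda>r s. \<alpha> $ r $ s"] ds by simp
  moreover have "real CARD('k) * \<beta> = Max ((\<lambda>\<pi>. \<Sum>r\<in>UNIV. \<alpha> $ r $ \<pi> r) ` {\<pi>. \<pi> permutes (UNIV :: 'k set)})"
    using assms(2) by simp
  ultimately show ?thesis unfolding frob_norm_sq_def by (simp add: power2_eq_square)
qed

end
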